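(* Let $n\geq 2$, $k\geq 0$, $0<\gamma<1$, and $$\Omega=\{(x',x_n)\in\mathbb R^{n-1}\times\mathbb R: |x'|<1,\ 0<x_n+\gamma<1-|x'|^2\}.$$ Then there is a constant $C_0>0$ depending only on $n,k,\gamma$ such that the function $$w(x',x_n)=C_0(x_n+\gamma)-C_0(x_n+\gamma)^{\frac{2+k}{2n+2k+2}}(1-|x'|^2)^{\frac{2n+k}{2n+2k+2}}$$ is smooth and convex in $\Omega$, and satisfies $$\det D^2 w\leq |w|^{-n-2-k}(x\cdot Dw-w)^{-k}\ \text{in }\Omega,\qquad w=0\ \text{on }\partial\Omega.$$ *)

theory Defs
  imports "HOL-Analysis.Analysis"
begin

text \<open>Points of R^n are vectors x :: real^'n, with n = CARD('n).
  A distinguished index e :: 'n plays the role of the last coordinate x_n;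
  the remaining coordinates form x'.\<close>

definition partial :: "(real^'n \<Rightarrow> real) \<Rightarrow> 'n \<Rightarrow> real^'n \<Rightarrow> real" where
  "partial f i x = frechet_derivative f (at x) (axis i 1)"

fun iter_partial :: "(real^'n \<Rightarrow> real) \<Rightarrow> 'n list \<Rightarrow> real^'n \<Rightarrow> real" where
  "iter_partial f [] = f"
| "iter_partial f (i # is) = partial (iter_partial f is) i"

definition smooth_on :: "(real^'n) set \<Rightarrow> (real^'n \<Rightarrow> real) \<Rightarrow> bool" where
  "smooth_on S f \<longleftrightarrow> (\<forall>is. \<forall>x\<in>S. iter_partial f is differentiable (at x))"

definition grad :: "(real^'n \<Rightarrow> real) \<Rightarrow> real^'n \<Rightarrow> real^'n" where
  "grad f x = (\<chi> i. partial f i x)"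

definition hessian :: "(real^'n \<Rightarrow> real) \<Rightarrow> real^'n \<Rightarrow> real^'n^'n" where
  "hessian f x = (\<chi> i j. partial (partial f j) i x)"

definition xprime_sq :: "'n \<Rightarrow> real^'n \<Rightarrow> real" where
  "xprime_sq e x = (\<Sum>i\<in>UNIV - {e}. (x $ i)^2)"

definition Omega :: "'n \<Rightarrow> real \<Rightarrow> (real^'n) set" where
  "Omega e \<gamma> = {x. xprime_sq e x < 1 \<and> 0 < x $ e + \<gamma> \<and> x $ e + \<gamma> < 1 - xprime_sq e x}"

end

theory Submission
  imports Defs
begin


lemma axis_sum_xp: "(\<Sum>i\<in>UNIV-{e}. (x::real^'n) $ i * axis j (1::real) $ i) = (if j = e then 0 else x $ j)"
  by (simp add: axis_def if_distrib sum.If_cases cong del: if_weak_cong)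

lemma vec_nth_deriv[derivative_intros]: "((\<lambda>x. (x::real^'n) $ i) has_derivative (\<lambda>h. h $ i)) F"
  by (rule bounded_linear.has_derivative[OF bounded_linear_vec_nth has_derivative_ident])

lemma xprime_sq_deriv:
  "(xprime_sq e has_derivative (\<lambda>h. 2 * (\<Sum>i\<in>UNIV-{e}. x $ i * h $ i))) (at x)"
  unfolding xprime_sq_def[abs_def]
  apply (rule has_derivative_eq_rhs)
   apply (rule derivative_eq_intros | simp)+
  apply (auto simp: sum_distrib_left fun_eq_iff mult_ac)
  done

lemma Tpow_deriv:
  assumes "0 < (x::real^'n) $ e + g"
  shows "((\<lambda>x. (x $ e + g) powr c) has_derivative (\<lambda>h. c * (x $ e + g) powr (c - 1) * h $ e)) (at x)"
  apply (rule has_derivative_eq_rhs)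
   apply (rule derivative_eq_intros | simp add: assms)+
  using assms by (auto simp: fun_eq_iff powr_diff)

lemma Spow_deriv:
  assumes "0 < 1 - xprime_sq e (x::real^'n)"
  shows "((\<lambda>x. (1 - xprime_sq e x) powr c) has_derivative
     (\<lambda>h. - 2 * c * (1 - xprime_sq e x) powr (c - 1) * (\<Sum>i\<in>UNIV-{e}. x $ i * h $ i))) (at x)"
  apply (rule has_derivative_eq_rhs)
   apply (rule derivative_eq_intros xprime_sq_deriv | simp add: assms)+
  using assms by (auto simp: fun_eq_iff powr_diff)



lemma cont_xp[continuous_intros]: "continuous_on S (xprime_sq e)"
  unfolding xprime_sq_def[abs_def] by (intro continuous_intros)

lemma open_Omega: "open (Omega e \<gamma>)"
  unfolding Omega_def
  by (intro open_Collect_conj open_Collect_less continuous_intros)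

inductive good :: "'n::finite \<Rightarrow> real \<Rightarrow> (real^'n \<Rightarrow> real) \<Rightarrow> bool" for e \<gamma> where
  gconst: "good e \<gamma> (\<lambda>x. c)"
| gcoord: "good e \<gamma> (\<lambda>x. x $ i)"
| gtpow: "good e \<gamma> (\<lambda>x. (x $ e + \<gamma>) powr c)"
| gspow: "good e \<gamma> (\<lambda>x. (1 - xprime_sq e x) powr c)"
| gadd: "good e \<gamma> f \<Longrightarrow> good e \<gamma> g \<Longrightarrow> good e \<gamma> (\<lambda>x. f x + g x)"
| gmult: "good e \<gamma> f \<Longrightarrow> good e \<gamma> g \<Longrightarrow> good e \<gamma> (\<lambda>x. f x * g x)"

lemma sum_if_mult: "(\<Sum>j\<in>(UNIV::'n::finite set). (if j = i then c else 0) * h j) = (c::real) * h i"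
proof -
  have "(\<Sum>j\<in>(UNIV::'n set). (if j = i then c else 0) * h j) = (\<Sum>j\<in>UNIV. if j = i then c * h j else 0)"
    by (intro sum.cong) auto
  also have "\<dots> = c * h i" by (simp add: sum.delta')
  finally show ?thesis .
qed
lemma sum_not_e: "(\<Sum>j\<in>(UNIV::'n::finite set). (if j = e then 0 else f j) * h j) = (\<Sum>j\<in>UNIV-{e}. f j * (h j::real))"
proof -
  have "(\<Sum>j\<in>(UNIV::'n set). (if j = e then 0 else f j) * h j) = (if e = e then 0 else f e) * h e + (\<Sum>j\<in>UNIV-{e}. (if j = e then 0 else f j) * h j)"
    by (rule sum.remove) auto
  also have "\<dots> = (\<Sum>j\<in>UNIV-{e}. f j * (h j::real))" by (auto intro!: sum.cong)
  finally show ?thesis .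
qed

lemma good_deriv:
  assumes "good e \<gamma> f"
  shows "\<exists>D. (\<forall>j. good e \<gamma> (D j)) \<and>
     (\<forall>x\<in>Omega e \<gamma>. (f has_derivative (\<lambda>h. \<Sum>j\<in>UNIV. D j x * h $ j)) (at x))"
  using assms
proof induction
  case (gconst c)
  show ?case
    by (rule exI[of _ "\<lambda>j x. 0"]) (auto intro: good.intros derivative_eq_intros)
next
  case (gcoord i)
  show ?case
  proof (rule exI[of _ "\<lambda>j x. if j = i then 1 else 0"], intro conjI ballI allI)
    fix j show "good e \<gamma> (\<lambda>x::real^'a. if j = i then 1 else 0)"
      by (cases "j = i") (auto intro: good.intros)
  next
    fix x :: "real^'a"
    show "((\<lambda>x. x $ i) has_derivative (\<lambda>h. \<Sum>j\<in>UNIV. (if j = i then 1 else 0) * h $ j)) (at x)"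
    proof -
      have "(\<lambda>h::real^'a. \<Sum>j\<in>UNIV. (if j = i then 1 else 0) * h $ j) = (\<lambda>h. h $ i)"
      proof
        fix h :: "real^'a"
        have "(\<Sum>j\<in>UNIV. (if j = i then 1 else 0) * h $ j) = (\<Sum>j\<in>UNIV. if j = i then h $ j else 0)"
          by (intro sum.cong) auto
        then show "(\<Sum>j\<in>UNIV. (if j = i then 1 else 0) * h $ j) = h $ i" by simp
      qed
      then show ?thesis by (simp only:) (rule vec_nth_deriv)
    qed
  qed
next
  case (gtpow c)
  show ?case
  proof (rule exI[of _ "\<lambda>j x. (if j = e then c else 0) * (x $ e + \<gamma>) powr (c - 1)"], intro conjI ballI allI)
    fix j show "good e \<gamma> (\<lambda>x::real^'a. (if j = e then c else 0) * (x $ e + \<gamma>) powr (c - 1))"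
      by (intro good.intros)
  next
    fix x :: "real^'a" assume "x \<in> Omega e \<gamma>"
    then have "0 < x $ e + \<gamma>" by (simp add: Omega_def)
    from Tpow_deriv[OF this, of c]
    show "((\<lambda>x. (x $ e + \<gamma>) powr c) has_derivative (\<lambda>h. \<Sum>j\<in>UNIV. (if j = e then c else 0) * (x $ e + \<gamma>) powr (c - 1) * h $ j)) (at x)"
      by (rule has_derivative_eq_rhs) (simp add: fun_eq_iff mult.assoc sum_if_mult del: mult_if_delta)
  qed
next
  case (gspow c)
  show ?case
  proof (rule exI[of _ "\<lambda>j x. (if j = e then 0 else -2 * c * x $ j * (1 - xprime_sq e x) powr (c - 1))"], intro conjI ballI allI)
    fix j show "good e \<gamma> (\<lambda>x::real^'a. (if j = e then 0 else -2 * c * x $ j * (1 - xprime_sq e x) powr (c - 1)))"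
    proof (cases "j = e")
      case True then show ?thesis by (simp add: gconst)
    next
      case False then show ?thesis by (simp only: if_not_P[OF False] if_False) (intro good.intros)
    qed
  next
    fix x :: "real^'a" assume "x \<in> Omega e \<gamma>"
    then have "0 < 1 - xprime_sq e x" by (simp add: Omega_def)
    from Spow_deriv[OF this, of c]
    show "((\<lambda>x. (1 - xprime_sq e x) powr c) has_derivative (\<lambda>h. \<Sum>j\<in>UNIV. (if j = e then 0 else -2 * c * x $ j * (1 - xprime_sq e x) powr (c - 1)) * h $ j)) (at x)"
      apply (rule has_derivative_eq_rhs)
      apply (simp only: sum_not_e fun_eq_iff)
      apply (simp add: sum_distrib_left mult_ac sum_negf)
      done
  qed
next
  case (gadd f g)
  then obtain D1 D2 where D1: "\<forall>j. good e \<gamma> (D1 j)" "\<forall>x\<in>Omega e \<gamma>. (f has_derivative (\<lambda>h. \<Sum>j\<in>UNIV. D1 j x * h $ j)) (at x)"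
    and D2: "\<forall>j. good e \<gamma> (D2 j)" "\<forall>x\<in>Omega e \<gamma>. (g has_derivative (\<lambda>h. \<Sum>j\<in>UNIV. D2 j x * h $ j)) (at x)"
    by blast
  show ?case
  proof (rule exI[of _ "\<lambda>j x. D1 j x + D2 j x"], intro conjI ballI allI)
    fix j show "good e \<gamma> (\<lambda>x. D1 j x + D2 j x)" using D1 D2 by (intro good.intros) auto
  next
    fix x assume x: "x \<in> Omega e \<gamma>"
    show "((\<lambda>x. f x + g x) has_derivative (\<lambda>h. \<Sum>j\<in>UNIV. (D1 j x + D2 j x) * h $ j)) (at x)"
      apply (rule has_derivative_eq_rhs)
       apply (rule has_derivative_add[OF D1(2)[rule_format, OF x] D2(2)[rule_format, OF x]])
      apply (simp add: fun_eq_iff distrib_right sum.distrib)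
      done
  qed
next
  case (gmult f g)
  then obtain D1 D2 where D1: "\<forall>j. good e \<gamma> (D1 j)" "\<forall>x\<in>Omega e \<gamma>. (f has_derivative (\<lambda>h. \<Sum>j\<in>UNIV. D1 j x * h $ j)) (at x)"
    and D2: "\<forall>j. good e \<gamma> (D2 j)" "\<forall>x\<in>Omega e \<gamma>. (g has_derivative (\<lambda>h. \<Sum>j\<in>UNIV. D2 j x * h $ j)) (at x)"
    by blast
  show ?case
  proof (rule exI[of _ "\<lambda>j x. f x * D2 j x + D1 j x * g x"], intro conjI ballI allI)
    fix j show "good e \<gamma> (\<lambda>x. f x * D2 j x + D1 j x * g x)" using D1 D2 gmult by (intro good.intros) auto
  next
    fix x assume x: "x \<in> Omega e \<gamma>"
    show "((\<lambda>x. f x * g x) has_derivative (\<lambda>h. \<Sum>j\<in>UNIV. (f x * D2 j x + D1 j x * g x) * h $ j)) (at x)"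
      apply (rule has_derivative_eq_rhs)
       apply (rule has_derivative_mult[OF D1(2)[rule_format, OF x] D2(2)[rule_format, OF x]])
      apply (simp add: fun_eq_iff distrib_right distrib_left sum.distrib sum_distrib_left sum_distrib_right mult_ac)
      done
  qed
qed

lemma partial_local:
  assumes "open U" "x \<in> U" "\<And>y. y \<in> U \<Longrightarrow> f y = g y" "(g has_derivative g') (at x)"
  shows "partial f i x = g' (axis i 1)"
proof -
  have "(f has_derivative g') (at x)"
    by (rule has_derivative_transform_within_open[OF assms(4) assms(1) assms(2)]) (simp add: assms(3))
  then show ?thesis unfolding partial_def by (simp flip: frechet_derivative_at)
qed

lemma good_iter:
  assumes "good e \<gamma> f"
  shows "\<exists>g. good e \<gamma> g \<and> (\<forall>x\<in>Omega e \<gamma>. iter_partial f is x = g x)"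
proof (induction "is")
  case Nil
  then show ?case using assms by auto
next
  case (Cons i "is")
  then obtain g where g: "good e \<gamma> g" "\<forall>x\<in>Omega e \<gamma>. iter_partial f is x = g x" by blast
  from good_deriv[OF g(1)] obtain D where D: "\<forall>j. good e \<gamma> (D j)"
    "\<forall>x\<in>Omega e \<gamma>. (g has_derivative (\<lambda>h. \<Sum>j\<in>UNIV. D j x * h $ j)) (at x)" by blast
  have "iter_partial f (i # is) x = D i x" if x: "x \<in> Omega e \<gamma>" for x
  proof -
    have "iter_partial f (i # is) x = (\<Sum>j\<in>UNIV. D j x * axis i 1 $ j)"
      using partial_local[OF open_Omega x, of "iter_partial f is" g, OF _ D(2)[rule_format, OF x]] g(2)
      by simp
    also have "\<dots> = D i x" by (simp add: axis_def if_distrib sum.If_cases cong del: if_weak_cong)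
    finally show ?thesis .
  qed
  then show ?case using D(1) by blast
qed

lemma good_smooth:
  assumes "good e \<gamma> f"
  shows "smooth_on (Omega e \<gamma>) f"
  unfolding smooth_on_def
proof (intro allI ballI)
  fix "is" x assume x: "x \<in> Omega e \<gamma>"
  obtain g where g: "good e \<gamma> g" "\<forall>x\<in>Omega e \<gamma>. iter_partial f is x = g x"
    using good_iter[OF assms] by blast
  from good_deriv[OF g(1)] obtain D where D:
    "\<forall>x\<in>Omega e \<gamma>. (g has_derivative (\<lambda>h. \<Sum>j\<in>UNIV. D j x * h $ j)) (at x)" by blast
  have "(iter_partial f is has_derivative (\<lambda>h. \<Sum>j\<in>UNIV. D j x * h $ j)) (at x)"
    by (rule has_derivative_transform_within_open[OF D[rule_format, OF x] open_Omega x]) (simp add: g(2))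
  then show "iter_partial f is differentiable at x" unfolding differentiable_def by blast
qed



lemma key_ineq:
  fixes T S \<gamma> k C0 a b N K M :: real and m :: nat
  assumes Ndef: "N = real m" and adef: "a = (2+k)/(2*N+2*k+2)" and bdef: "b = (2*N+k)/(2*N+2*k+2)"
    and Kdef: "K = \<gamma>*a + 2*b" and Mdef: "M = a*b*(2*b)^(m-1)*K powr k"
    and m2: "m \<ge> 2" and k0: "k \<ge> 0" and g0: "0 < \<gamma>" and g1: "\<gamma> < 1"
    and T0: "0 < T" and TS: "T < S" and S1: "S \<le> 1" and C0def: "C0 = 1/(M+1)"
  defines "P1 \<equiv> T powr (a-1) * S powr b"
    and "P2 \<equiv> T powr a * S powr (b-1)"
    and "P3 \<equiv> T powr a * S powr b"
    and "P4 \<equiv> T powr (a-2) * S powr b"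
  defines "L \<equiv> (T-\<gamma>)*(1 - a*P1) + 2*b*P2*(1-S) - T + P3"
  shows "0 < L" "0 < P3 - T"
    "(C0*(a*b*P4))*(C0*(2*b*P2))^(m-1)
        \<le> (C0*(P3 - T)) powr (-(N+2+k)) * (C0*L) powr (-k)"
proof -
  have N2: "N \<ge> 2" using m2 Ndef by simp
  have Dpos: "2*N+2*k+2 > 0" using N2 k0 by simp
  have a0: "a > 0" and b0: "b > 0" using Dpos k0 N2 by (simp_all add: adef bdef)
  have ab: "a + b = 1"
  proof -
    have "a + b = (2+k+(2*N+k))/(2*N+2*k+2)" by (simp add: adef bdef add_divide_distrib)
    also have "2+k+(2*N+k) = 2*N+2*k+2" by simp
    finally show ?thesis using Dpos by simp
  qed
  have S0: "S > 0" using T0 TS by simp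
  define lt where "lt = ln T"
  define ls where "ls = ln S"
  have ltls: "lt < ls" using T0 TS by (simp add: lt_def ls_def)
  have ls0: "ls \<le> 0" using S0 S1 by (simp add: ls_def)
  have pw: "T powr p * S powr q = exp (p*lt + q*ls)" for p q
    using T0 S0 by (simp add: powr_def lt_def ls_def exp_add)
  have Texp: "T = exp lt" using T0 by (simp add: lt_def)
  have P1e: "P1 = exp ((a-1)*lt + b*ls)" by (simp add: P1_def pw)
  have P2e: "P2 = exp (a*lt + (b-1)*ls)" by (simp add: P2_def pw)
  have P3e: "P3 = exp (a*lt + b*ls)" by (simp add: P3_def pw)
  have P4e: "P4 = exp ((a-2)*lt + b*ls)" by (simp add: P4_def pw)
  have P1pos: "P1 > 0" and P2pos: "P2 > 0" and P3pos: "P3 > 0" and P4pos: "P4 > 0"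
    by (simp_all add: P1e P2e P3e P4e)
  have P3T: "P3 = T * P1" unfolding P3e P1e Texp by (simp flip: exp_add add: algebra_simps)
  have Sexp: "S = exp ls" using S0 by (simp add: ls_def)
  have P2S: "P2 * S = P3"
  proof -
    have "P2 * S = exp (a*lt + (b-1)*ls) * exp ls" using Sexp P2e by simp
    also have "\<dots> = exp (a*lt + (b-1)*ls + ls)" by (simp add: exp_add)
    also have "a*lt + (b-1)*ls + ls = a*lt + b*ls" by (simp add: algebra_simps)
    finally show ?thesis by (simp add: P3e)
  qed
  have P21: "P2 \<le> P1" unfolding P2e P1e using ltls by (simp add: algebra_simps)
  have P32: "P3 \<le> P2" unfolding P2e P3e using ls0 by (simp add: algebra_simps)
  have TP3: "T < P3" unfolding P3e Texp
  proof -
    have a1: "a = 1 - b" using ab by simp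
    have "a*lt + b*ls = lt + b*(ls-lt)" unfolding a1 by (simp add: algebra_simps)
    moreover have "b*(ls-lt) > 0" using b0 ltls by simp
    ultimately have "lt < a*lt + b*ls" by simp
    then show "exp lt < exp (a*lt + b*ls)" by simp
  qed
  then show "0 < P3 - T" by simp
  have Lid: "L = -\<gamma> + \<gamma>*a*P1 + 2*b*P2 - b*P3"
  proof -
    have "L = (T-\<gamma>)*(1 - a*P1) + 2*b*P2 - 2*b*(P2*S) - T + P3" by (simp add: L_def algebra_simps)
    also have "\<dots> = -\<gamma> + \<gamma>*a*P1 + 2*b*P2 - b*P3" unfolding P2S P3T using ab
      by (simp add: algebra_simps) (metis add_diff_cancel_left' distrib_left mult.commute mult.left_commute mult_1)
    finally show ?thesis .
  qed
  have young: "(\<gamma>*P1) powr a * P2 powr b \<le> a*(\<gamma>*P1) + b*P2"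
    by (rule Youngs_inequality_0) (use a0 b0 ab g0 P1pos P2pos in auto)
  have "(\<gamma>*P1) powr a * P2 powr b = \<gamma> powr a * exp (a*((a-1)*lt + b*ls) + b*(a*lt + (b-1)*ls))"
  proof -
    have "(\<gamma>*P1) powr a = \<gamma> powr a * P1 powr a" using g0 P1pos by (simp add: powr_mult)
    moreover have "P1 powr a = exp (a*((a-1)*lt + b*ls))" by (simp add: P1e powr_def)
    moreover have "P2 powr b = exp (b*(a*lt + (b-1)*ls))" by (simp add: P2e powr_def)
    ultimately show ?thesis by (simp add: exp_add)
  qed
  also have "a*((a-1)*lt + b*ls) + b*(a*lt + (b-1)*ls) = 0"
  proof -
    have "a*((a-1)*lt + b*ls) + b*(a*lt + (b-1)*ls) = (a+b-1)*(a*lt + b*ls)" by (simp add: algebra_simps)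
    then show ?thesis using ab by simp
  qed
  finally have gam: "\<gamma> powr a \<le> a*(\<gamma>*P1) + b*P2" using young by simp
  have "\<gamma> powr 1 < \<gamma> powr a"
    by (rule powr_less_mono') (use g0 g1 a0 ab b0 in auto)
  then have gg: "\<gamma> < \<gamma> powr a" using g0 by simp
  have Lpos: "L \<ge> \<gamma> powr a - \<gamma>"
  proof -
    have "b*P3 \<le> b*P2" using P32 b0 by (simp add: mult_left_mono)
    moreover have "a*(\<gamma>*P1) = \<gamma>*a*P1" by simp
    ultimately show ?thesis unfolding Lid using gam by linarith
  qed
  then show "0 < L" using gg by simp
  have Lup: "L \<le> K * P1"
  proof -
    have "b*P2 \<le> b*P1" using P21 b0 by (simp add: mult_left_mono)
    moreover have "0 \<le> b*P3" using b0 P3pos by simp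
    moreover have "K * P1 = \<gamma>*a*P1 + 2*(b*P1)" unfolding Kdef by (simp add: algebra_simps)
    ultimately show ?thesis unfolding Lid using g0 by linarith
  qed
  have Kpos: "K > 0" unfolding Kdef using g0 a0 b0 by (intro add_pos_pos mult_pos_pos) auto
  have Mpos: "M > 0" unfolding Mdef using Kpos a0 b0 by simp
  have C0pos: "C0 > 0" and C0le: "C0 \<le> 1" using Mpos by (simp_all add: C0def)
  define lower where "lower = (C0*P3) powr (-(N+2+k)) * (C0*(K*P1)) powr (-k)"
  have low_le: "lower \<le> (C0*(P3 - T)) powr (-(N+2+k)) * (C0*L) powr (-k)"
    unfolding lower_def
  proof (rule mult_mono)
    show "(C0*P3) powr (-(N+2+k)) \<le> (C0*(P3 - T)) powr (-(N+2+k))"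
      by (rule powr_mono2') (use N2 k0 C0pos TP3 T0 in auto)
    show "(C0*(K*P1)) powr (-k) \<le> (C0*L) powr (-k)"
      by (rule powr_mono2') (use k0 C0pos \<open>0 < L\<close> Lup in auto)
  qed auto
  define LHS where "LHS = (C0*(a*b*P4))*(C0*(2*b*P2))^(m-1)"
  have LHSpos: "LHS > 0" unfolding LHS_def using C0pos a0 b0 P4pos P2pos by simp
  have lowpos: "lower > 0" unfolding lower_def using C0pos Kpos P1pos P3pos by simp
  have m1: "real (m-1) = N - 1" using m2 Ndef by (simp add: of_nat_diff)
  have m1': "real (m - Suc 0) = N - 1" using m1 by simp
  have lnC0: "ln C0 = - ln (M+1)" using Mpos by (simp add: C0def ln_div)
  have lnM: "ln M = ln a + ln b + (N-1)*(ln 2 + ln b) + k * ln K"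
    unfolding Mdef using a0 b0 Kpos by (simp add: ln_mult ln_realpow m1 m1' algebra_simps)
  have lnLHS: "ln LHS = (ln C0 + ln a + ln b + ((a-2)*lt + b*ls)) + (N-1)*(ln C0 + ln 2 + ln b + (a*lt + (b-1)*ls))"
    unfolding LHS_def using C0pos a0 b0 P4pos P2pos by (simp add: ln_mult ln_realpow m1 m1' P4e P2e)
  have lnlow: "ln lower = -(N+2+k)*(ln C0 + (a*lt+b*ls)) + -k*(ln C0 + ln K + ((a-1)*lt + b*ls))"
    unfolding lower_def using C0pos Kpos P1pos P3pos by (simp add: ln_mult P3e P1e)
  have key: "ln lower - ln LHS = (2*N+2+2*k)*ln(M+1) - ln M - (N+k+1)*ls
      + lt*((2+k) - a*(2*N+2*k+2)) + ls*((2*N+k) - b*(2*N+2*k+2))"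
    unfolding lnlow lnLHS lnC0 lnM by (simp add: algebra_simps)
  have ha: "a*(2*N+2*k+2) = 2+k" using Dpos by (simp add: adef)
  have hb: "b*(2*N+2*k+2) = 2*N+k" using Dpos by (simp add: bdef)
  have l1: "ln M \<le> ln (M+1)" using Mpos by simp
  have l2: "(2*N+1+2*k)*ln(M+1) \<ge> 0" using Mpos N2 k0 by simp
  have l3: "(N+k+1)*ls \<le> 0" using ls0 N2 k0 by (simp add: mult_nonneg_nonpos)
  have z1: "lt*((2+k) - a*(2*N+2*k+2)) = 0" using ha by simp
  have z2: "ls*((2*N+k) - b*(2*N+2*k+2)) = 0" using hb by simp
  have key2: "ln lower - ln LHS = (2*N+2+2*k)*ln(M+1) - ln M - (N+k+1)*ls"
    using key z1 z2 by linarith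
  have sp: "(2*N+2+2*k)*ln(M+1) = ln(M+1) + (2*N+1+2*k)*ln(M+1)" by (simp add: algebra_simps)
  have "ln LHS \<le> ln lower" using key2 sp l1 l2 l3 by linarith
  then have "LHS \<le> lower" using LHSpos lowpos by simp
  then show "(C0*(a*b*P4))*(C0*(2*b*P2))^(m-1)
        \<le> (C0*(P3 - T)) powr (-(N+2+k)) * (C0*L) powr (-k)"
    using low_le unfolding LHS_def by simp
qed



lemma PTS_deriv:
  assumes x: "x \<in> Omega e \<gamma>"
  shows "((\<lambda>y. (y $ e + \<gamma>) powr p * (1 - xprime_sq e y) powr q) has_derivative
    (\<lambda>h. p * (x $ e + \<gamma>) powr (p - 1) * (1 - xprime_sq e x) powr q * h $ e
       - 2 * q * (x $ e + \<gamma>) powr p * (1 - xprime_sq e x) powr (q - 1) * (\<Sum>i\<in>UNIV-{e}. x $ i * h $ i))) (at x)"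
proof -
  have T: "0 < x $ e + \<gamma>" and S: "0 < 1 - xprime_sq e x" using x by (auto simp: Omega_def)
  show ?thesis
    apply (rule has_derivative_eq_rhs)
     apply (rule has_derivative_mult[OF Tpow_deriv[OF T] Spow_deriv[OF S]])
    apply (simp add: fun_eq_iff algebra_simps)
    done
qed

lemma axis_e: "(axis j (1::real) :: real^'n) $ e = (if j = e then 1 else 0)"
  by (simp add: axis_def)

lemma partial_PTS:
  assumes x: "x \<in> Omega e \<gamma>"
  shows "partial (\<lambda>y. (y $ e + \<gamma>) powr p * (1 - xprime_sq e y) powr q) j x =
    (if j = e then p * (x $ e + \<gamma>) powr (p - 1) * (1 - xprime_sq e x) powr q
     else - 2 * q * (x $ e + \<gamma>) powr p * (1 - xprime_sq e x) powr (q - 1) * x $ j)"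
proof -
  have "partial (\<lambda>y. (y $ e + \<gamma>) powr p * (1 - xprime_sq e y) powr q) j x =
    p * (x $ e + \<gamma>) powr (p - 1) * (1 - xprime_sq e x) powr q * axis j (1::real) $ e
       - 2 * q * (x $ e + \<gamma>) powr p * (1 - xprime_sq e x) powr (q - 1) * (\<Sum>i\<in>UNIV-{e}. x $ i * axis j (1::real) $ i)"
    by (rule partial_local[OF open_Omega x _ PTS_deriv[OF x]]) simp
  also have "\<dots> = (if j = e then p * (x $ e + \<gamma>) powr (p - 1) * (1 - xprime_sq e x) powr q
     else - 2 * q * (x $ e + \<gamma>) powr p * (1 - xprime_sq e x) powr (q - 1) * x $ j)"
    by (subst axis_sum_xp, subst axis_e, simp)
  finally show ?thesis .
qed

lemma partial_add:
  assumes x: "x \<in> U" "open U" and f: "(f has_derivative f') (at x)" and g: "(g has_derivative g') (at x)"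
  shows "partial (\<lambda>y. f y + g y) j x = partial f j x + partial g j x"
proof -
  have "partial (\<lambda>y. f y + g y) j x = f' (axis j 1) + g' (axis j 1)"
    using partial_local[OF x(2) x(1), of "\<lambda>y. f y + g y", OF _ has_derivative_add[OF f g]] by simp
  moreover have "partial f j x = f' (axis j 1)" using partial_local[OF x(2) x(1) _ f] by simp
  moreover have "partial g j x = g' (axis j 1)" using partial_local[OF x(2) x(1) _ g] by simp
  ultimately show ?thesis by simp
qed


lemma partial_scaled_local:
  assumes "open U" "x \<in> U" "\<And>y. y \<in> U \<Longrightarrow> F y = c * f y + d" "(f has_derivative f') (at x)"
  shows "partial F i x = c * partial f i x"
proof -
  have "((\<lambda>y. c * f y + d) has_derivative (\<lambda>h. c * f' h)) (at x)"
    apply (rule has_derivative_eq_rhs)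
     apply (rule assms(4) derivative_eq_intros | simp)+
    done
  from partial_local[OF assms(1,2) assms(3) this] have "partial F i x = c * f' (axis i 1)" .
  moreover have "partial f i x = f' (axis i 1)"
    using partial_local[OF assms(1,2) _ assms(4), of f] by simp
  ultimately show ?thesis by simp
qed

lemma partial_prodcoord_local:
  assumes "open U" "x \<in> U" "\<And>y. y \<in> U \<Longrightarrow> F y = c * (f y * y $ j)" "(f has_derivative f') (at x)"
  shows "partial F i x = c * (partial f i x * x $ j + f x * (if i = j then 1 else 0))"
proof -
  have "((\<lambda>y. c * (f y * y $ j)) has_derivative (\<lambda>h. c * (f x * h $ j + f' h * x $ j))) (at x)"
    apply (rule has_derivative_eq_rhs)
     apply (rule assms(4) derivative_eq_intros | simp)+
    done
  from partial_local[OF assms(1,2) assms(3) this] have "partial F i x = c * (f x * axis i 1 $ j + f' (axis i 1) * x $ j)" .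
  moreover have "partial f i x = f' (axis i 1)"
    using partial_local[OF assms(1,2) _ assms(4), of f] by simp
  moreover have "axis i (1::real) $ j = (if i = j then 1 else 0)" by (simp add: axis_def)
  ultimately show ?thesis by (simp add: algebra_simps)
qed

lemma w_partial:
  assumes x: "x \<in> Omega e \<gamma>"
  shows "partial (\<lambda>x. C0 * (x $ e + \<gamma>) - C0 * (x $ e + \<gamma>) powr a * (1 - xprime_sq e x) powr b) j x
    = C0 * (if j = e then 1 - a * ((x $ e + \<gamma>) powr (a - 1) * (1 - xprime_sq e x) powr b)
            else 2 * b * ((x $ e + \<gamma>) powr a * (1 - xprime_sq e x) powr (b - 1)) * x $ j)"
proof -
  have d: "((\<lambda>x. C0 * (x $ e + \<gamma>) + (- C0) * ((x $ e + \<gamma>) powr a * (1 - xprime_sq e x) powr b)) has_derivative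
     (\<lambda>h. C0 * h $ e + (-C0) * (a * (x $ e + \<gamma>) powr (a - 1) * (1 - xprime_sq e x) powr b * h $ e
       - 2 * b * (x $ e + \<gamma>) powr a * (1 - xprime_sq e x) powr (b - 1) * (\<Sum>i\<in>UNIV-{e}. x $ i * h $ i)))) (at x)"
    apply (rule has_derivative_eq_rhs)
     apply (rule PTS_deriv[OF x] derivative_eq_intros | simp)+
    done
  have "partial (\<lambda>x. C0 * (x $ e + \<gamma>) - C0 * (x $ e + \<gamma>) powr a * (1 - xprime_sq e x) powr b) j x
     = C0 * axis j (1::real) $ e + (-C0) * (a * (x $ e + \<gamma>) powr (a - 1) * (1 - xprime_sq e x) powr b * axis j (1::real) $ e
       - 2 * b * (x $ e + \<gamma>) powr a * (1 - xprime_sq e x) powr (b - 1) * (\<Sum>i\<in>UNIV-{e}. x $ i * axis j (1::real) $ i))"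
    by (rule partial_local[OF open_Omega x _ d]) (simp add: algebra_simps)
  also have "\<dots> = C0 * (if j = e then 1 - a * ((x $ e + \<gamma>) powr (a - 1) * (1 - xprime_sq e x) powr b)
            else 2 * b * ((x $ e + \<gamma>) powr a * (1 - xprime_sq e x) powr (b - 1)) * x $ j)"
    by (subst axis_sum_xp, simp add: axis_e algebra_simps)
  finally show ?thesis .
qed

lemma w_hess:
  assumes x: "x \<in> Omega e \<gamma>"
  shows "partial (partial (\<lambda>x. C0 * (x $ e + \<gamma>) - C0 * (x $ e + \<gamma>) powr a * (1 - xprime_sq e x) powr b) j) i x
    = (if j = e then (- C0 * a) * (if i = e then (a - 1) * (x $ e + \<gamma>) powr (a - 1 - 1) * (1 - xprime_sq e x) powr b
                     else - 2 * b * (x $ e + \<gamma>) powr (a - 1) * (1 - xprime_sq e x) powr (b - 1) * x $ i)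
       else (2 * b * C0) * ((if i = e then a * (x $ e + \<gamma>) powr (a - 1) * (1 - xprime_sq e x) powr (b - 1)
                     else - 2 * (b - 1) * (x $ e + \<gamma>) powr a * (1 - xprime_sq e x) powr (b - 1 - 1) * x $ i) * x $ j
              + (x $ e + \<gamma>) powr a * (1 - xprime_sq e x) powr (b - 1) * (if i = j then 1 else 0)))"
proof (cases "j = e")
  case True
  have "partial (partial (\<lambda>x. C0 * (x $ e + \<gamma>) - C0 * (x $ e + \<gamma>) powr a * (1 - xprime_sq e x) powr b) j) i x
     = (- C0 * a) * partial (\<lambda>y. (y $ e + \<gamma>) powr (a - 1) * (1 - xprime_sq e y) powr b) i x"
    by (rule partial_scaled_local[OF open_Omega x _ PTS_deriv[OF x], where d = C0])
       (use w_partial[of _ e \<gamma> C0 a b j] True in \<open>simp add: algebra_simps\<close>)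
  then show ?thesis using True by (simp add: partial_PTS[OF x])
next
  case False
  have "partial (partial (\<lambda>x. C0 * (x $ e + \<gamma>) - C0 * (x $ e + \<gamma>) powr a * (1 - xprime_sq e x) powr b) j) i x
     = (2 * b * C0) * (partial (\<lambda>y. (y $ e + \<gamma>) powr a * (1 - xprime_sq e y) powr (b - 1)) i x * x $ j
        + (x $ e + \<gamma>) powr a * (1 - xprime_sq e x) powr (b - 1) * (if i = j then 1 else 0))"
    by (rule partial_prodcoord_local[OF open_Omega x _ PTS_deriv[OF x]])
       (use w_partial[of _ e \<gamma> C0 a b j] False in \<open>simp add: algebra_simps\<close>)
  then show ?thesis using False by (simp add: partial_PTS[OF x])
qed



lemma det_zero_off:
  fixes A :: "real^'n::finite^'n"
  assumes ld: "\<And>p. p permutes (UNIV::'n set) \<Longrightarrow> p \<noteq> id \<Longrightarrow> \<exists>i. A$i$p i = 0"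
  shows "det A = prod (\<lambda>i. A$i$i) (UNIV::'n set)"
proof -
  let ?U = "UNIV:: 'n set"
  let ?PU = "{p. p permutes ?U}"
  let ?pp = "\<lambda>p. of_int (sign p) * prod (\<lambda>i. A$i$p i) (UNIV :: 'n set)"
  have fU: "finite ?U" by simp
  from finite_permutations[OF fU] have fPU: "finite ?PU" .
  have id0: "{id} \<subseteq> ?PU"
    by (auto simp: permutes_id)
  have p0: "\<forall>p \<in> ?PU - {id}. ?pp p = 0"
  proof
    fix p
    assume p: "p \<in> ?PU - {id}"
    then obtain i where "A$i$p i = 0" using ld by blast
    then have "prod (\<lambda>i. A$i$p i) ?U = 0" by (intro prod_zero[OF fU]) blast
    then show "?pp p = 0" by simp
  qed
  from sum.mono_neutral_cong_left[OF fPU id0 p0] show ?thesis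
    unfolding det_def by (simp add: sign_id)
qed

lemma det_unit_lower:
  fixes u :: "'n::finite \<Rightarrow> real"
  assumes ue: "u e = 0"
  shows "det ((\<chi> i j. (if i = j then 1 else 0) + (if j = e then u i else 0)) :: real^'n^'n) = 1"
proof -
  define A where "A = ((\<chi> i j. (if i = j then 1 else 0) + (if j = e then u i else 0)) :: real^'n^'n)"
  have Aij: "A$i$j = (if i = j then 1 else 0) + (if j = e then u i else 0)" for i j
    by (simp add: A_def)
  have "det A = prod (\<lambda>i. A$i$i) (UNIV::'n set)"
  proof (rule det_zero_off)
    fix p assume pp: "p permutes (UNIV::'n set)" and pid: "p \<noteq> id"
    from pid obtain i where i: "p i \<noteq> i" by (auto simp: fun_eq_iff)
    show "\<exists>i. A$i$p i = 0"
    proof (cases "p e = e")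
      case True
      then have "i \<noteq> e" using i by auto
      moreover have "p i \<noteq> e" using True i permutes_inj[OF pp] by (metis injD)
      ultimately have "A$i$p i = 0" using i by (simp add: Aij)
      then show ?thesis by blast
    next
      case False
      then have "A$e$p e = 0" using ue by (simp add: Aij)
      then show ?thesis by blast
    qed
  qed
  also have "\<dots> = 1" using ue by (intro prod.neutral) (simp add: Aij)
  finally show ?thesis by (simp add: A_def)
qed

lemma LDL_entries:
  fixes u d :: "'n::finite \<Rightarrow> real"
  assumes ue: "u e = 0"
  shows "((\<chi> i j. (if i = j then 1 else 0) + (if j = e then u i else 0)) ** (\<chi> i j. if i = j then d i else 0)
      ** transpose (\<chi> i j. (if i = j then 1 else 0) + (if j = e then u i else 0)) :: real^'n^'n) $ i $ j
    = (if i = j \<and> i \<noteq> e then d i else 0) + ((if i = e then 1 else 0) + u i) * ((if j = e then 1 else 0) + u j) * d e"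
proof -
  let ?L = "(\<chi> i j. (if i = j then 1 else 0) + (if j = e then u i else 0)) :: real^'n^'n"
  let ?D = "(\<chi> i j. if i = j then d i else 0) :: real^'n^'n"
  have LD: "(?L ** ?D) $ i $ k = ?L $ i $ k * d k" for i k
  proof -
    have "(?L ** ?D) $ i $ k = (\<Sum>l\<in>UNIV. if l = k then ?L $ i $ k * d k else 0)"
      unfolding matrix_matrix_mult_def by (simp only: vec_lambda_beta) (intro sum.cong, auto)
    also have "\<dots> = ?L $ i $ k * d k" by simp
    finally show ?thesis .
  qed
  have "(?L ** ?D ** transpose ?L) $ i $ j = (\<Sum>k\<in>UNIV. (?L ** ?D) $ i $ k * transpose ?L $ k $ j)"
    by (simp only: matrix_matrix_mult_def[of "?L ** ?D" "transpose ?L"] vec_lambda_beta)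
  also have "\<dots> = (\<Sum>k\<in>UNIV. ?L $ i $ k * d k * ?L $ j $ k)"
    by (simp only: LD transpose_def vec_lambda_beta)
  also have "\<dots> = ?L $ i $ e * d e * ?L $ j $ e + (\<Sum>k\<in>UNIV-{e}. ?L $ i $ k * d k * ?L $ j $ k)"
    by (rule sum.remove) auto
  also have "(\<Sum>k\<in>UNIV-{e}. ?L $ i $ k * d k * ?L $ j $ k) = (\<Sum>k\<in>UNIV-{e}. if k = i \<and> i = j then d i else 0)"
    by (intro sum.cong) auto
  also have "\<dots> = (if i = j \<and> i \<noteq> e then d i else 0)"
    by (cases "i = j") (auto simp: sum.If_cases)
  finally show ?thesis using ue by (auto simp: algebra_simps)
qed

lemma LDL_det:
  fixes u d :: "'n::finite \<Rightarrow> real"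
  assumes ue: "u e = 0"
  shows "det ((\<chi> i j. (if i = j then 1 else 0) + (if j = e then u i else 0)) ** (\<chi> i j. if i = j then d i else 0)
      ** transpose (\<chi> i j. (if i = j then 1 else 0) + (if j = e then u i else 0)) :: real^'n^'n) = prod d UNIV"
  by (simp add: det_mul det_unit_lower[where u=u and e=e, OF ue] det_diagonal)



lemma sq_convex:
  fixes u v p q :: real
  assumes "u \<ge> 0" "v \<ge> 0" "u + v = 1"
  shows "(u * p + v * q) ^ 2 \<le> u * p ^ 2 + v * q ^ 2"
proof -
  have v: "v = 1 - u" using assms by simp
  have "u * p ^ 2 + v * q ^ 2 - (u * p + v * q) ^ 2 = u * v * (p - q) ^ 2" unfolding v by (simp add: power2_eq_square algebra_simps)
  moreover have "u * v * (p - q) ^ 2 \<ge> 0" using assms by simp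
  ultimately show ?thesis by simp
qed

lemma xp_convex:
  assumes "u \<ge> 0" "v \<ge> 0" "u + v = 1"
  shows "xprime_sq e (u *\<^sub>R x + v *\<^sub>R y) \<le> u * xprime_sq e x + v * xprime_sq e (y::real^'n)"
proof -
  have "xprime_sq e (u *\<^sub>R x + v *\<^sub>R y) = (\<Sum>i\<in>UNIV-{e}. (u * x$i + v * y$i)^2)"
    by (simp add: xprime_sq_def)
  also have "\<dots> \<le> (\<Sum>i\<in>UNIV-{e}. u * (x$i)^2 + v * (y$i)^2)"
    by (rule sum_mono) (rule sq_convex[OF assms])
  also have "\<dots> = u * xprime_sq e x + v * xprime_sq e y"
    by (simp add: xprime_sq_def sum.distrib sum_distrib_left)
  finally show ?thesis .
qed

lemma xp_nonneg: "0 \<le> xprime_sq e x"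
  by (simp add: xprime_sq_def sum_nonneg)

lemma convex_Omega: "convex (Omega e \<gamma>)"
  unfolding convex_def
proof (intro ballI allI impI)
  fix x y :: "real^'a" and u v :: real
  assume x: "x \<in> Omega e \<gamma>" and y: "y \<in> Omega e \<gamma>" and u: "0 \<le> u" and v: "0 \<le> v" and uv: "u + v = 1"
  have xp: "xprime_sq e (u *\<^sub>R x + v *\<^sub>R y) \<le> u * xprime_sq e x + v * xprime_sq e y"
    by (rule xp_convex[OF u v uv])
  have T: "(u *\<^sub>R x + v *\<^sub>R y) $ e + \<gamma> = u * (x $ e + \<gamma>) + v * (y $ e + \<gamma>)"
    using uv by (simp add: algebra_simps) (metis add.commute distrib_left mult.commute mult_1)
  from x y have x1: "xprime_sq e x < 1" "0 < x $ e + \<gamma>" "x $ e + \<gamma> < 1 - xprime_sq e x"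
    and y1: "xprime_sq e y < 1" "0 < y $ e + \<gamma>" "y $ e + \<gamma> < 1 - xprime_sq e y"
    by (auto simp: Omega_def)
  have c1: "u * xprime_sq e x + v * xprime_sq e y < 1"
  proof (cases "u = 0")
    case True then show ?thesis using uv y1 by simp
  next
    case False
    then have "u * xprime_sq e x < u * 1" using u x1 by simp
    moreover have "v * xprime_sq e y \<le> v * 1" using v y1 by (intro mult_left_mono) auto
    ultimately show ?thesis using uv by simp
  qed
  have c2: "0 < u * (x $ e + \<gamma>) + v * (y $ e + \<gamma>)"
  proof (cases "u = 0")
    case True then show ?thesis using uv y1 by simp
  next
    case False
    then have "0 < u * (x $ e + \<gamma>)" using u x1 by simp
    moreover have "0 \<le> v * (y $ e + \<gamma>)" using v y1 by simp
    ultimately show ?thesis by simp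
  qed
  have c3: "u * (x $ e + \<gamma>) + v * (y $ e + \<gamma>) < 1 - (u * xprime_sq e x + v * xprime_sq e y)"
  proof (cases "u = 0")
    case True then show ?thesis using uv y1 by simp
  next
    case False
    then have "u * (x $ e + \<gamma> + xprime_sq e x) < u * 1" using u x1 by simp
    moreover have "v * (y $ e + \<gamma> + xprime_sq e y) \<le> v * 1" using v y1 by (intro mult_left_mono) auto
    ultimately show ?thesis using uv by (simp add: algebra_simps)
  qed
  show "u *\<^sub>R x + v *\<^sub>R y \<in> Omega e \<gamma>"
    unfolding Omega_def using xp T c1 c2 c3 by simp
qed

lemma holder2:
  fixes T1 T2 S1 S2 u v a b :: real
  assumes "0 < T1" "0 < T2" "0 < S1" "0 < S2" "0 \<le> u" "0 \<le> v" "u + v = 1" "0 \<le> a" "0 \<le> b" "a + b = 1"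
  shows "u * (T1 powr a * S1 powr b) + v * (T2 powr a * S2 powr b) \<le> (u * T1 + v * T2) powr a * (u * S1 + v * S2) powr b"
proof -
  define t where "t = u * T1 + v * T2"
  define s where "s = u * S1 + v * S2"
  have t0: "t > 0"
  proof (cases "u = 0")
    case True then show ?thesis using assms by (simp add: t_def)
  next
    case False then have "u * T1 > 0" using assms by simp
    moreover have "v * T2 \<ge> 0" using assms by simp
    ultimately show ?thesis by (simp add: t_def)
  qed
  have s0: "s > 0"
  proof (cases "u = 0")
    case True then show ?thesis using assms by (simp add: s_def)
  next
    case False then have "u * S1 > 0" using assms by simp
    moreover have "v * S2 \<ge> 0" using assms by simp
    ultimately show ?thesis by (simp add: s_def)
  qed
  have y: "T powr a * S powr b \<le> t powr a * s powr b * (a * (T/t) + b * (S/s))" if "T > 0" "S > 0" for T S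
  proof -
    have "(T/t) powr a * (S/s) powr b \<le> a * (T/t) + b * (S/s)"
      by (rule Youngs_inequality_0) (use assms that t0 s0 in auto)
    moreover have "(T/t) powr a * (S/s) powr b = (T powr a * S powr b) / (t powr a * s powr b)"
      using that t0 s0 by (simp add: powr_divide)
    ultimately have "(T powr a * S powr b) / (t powr a * s powr b) \<le> a * (T/t) + b * (S/s)" by simp
    moreover have "t powr a * s powr b > 0" using t0 s0 by simp
    ultimately show ?thesis by (simp add: divide_le_eq mult.commute)
  qed
  have "u * (T1 powr a * S1 powr b) + v * (T2 powr a * S2 powr b)
     \<le> u * (t powr a * s powr b * (a * (T1/t) + b * (S1/s))) + v * (t powr a * s powr b * (a * (T2/t) + b * (S2/s)))"
    using y[of T1 S1] y[of T2 S2] assms by (intro add_mono mult_left_mono) auto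
  also have "\<dots> = t powr a * s powr b * (a * ((u * T1 + v * T2)/t) + b * ((u * S1+v * S2)/s))"
    by (simp add: algebra_simps add_divide_distrib)
  also have "\<dots> = t powr a * s powr b" using t0 s0 assms by (simp add: t_def[symmetric] s_def[symmetric])
  finally show ?thesis by (simp add: t_def s_def)
qed

lemma convex_w:
  assumes C0: "C0 > 0" and a: "0 \<le> a" and b: "0 \<le> b" and ab: "a + b = 1"
  shows "convex_on (Omega e \<gamma>) (\<lambda>x. C0 * (x $ e + \<gamma>) - C0 * (x $ e + \<gamma>) powr a * (1 - xprime_sq e x) powr b)"
  unfolding convex_on_def
proof (intro conjI convex_Omega ballI allI impI)
  fix x y :: "real^'a" and u v :: real
  assume x: "x \<in> Omega e \<gamma>" and y: "y \<in> Omega e \<gamma>" and u: "0 \<le> u" and v: "0 \<le> v" and uv: "u + v = 1"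
  let ?z = "u *\<^sub>R x + v *\<^sub>R y"
  have xp: "xprime_sq e ?z \<le> u * xprime_sq e x + v * xprime_sq e y"
    by (rule xp_convex[OF u v uv])
  have T: "?z $ e + \<gamma> = u * (x $ e + \<gamma>) + v * (y $ e + \<gamma>)"
    using uv by (simp add: algebra_simps) (metis add.commute distrib_left mult.commute mult_1)
  from x y have x1: "0 < x $ e + \<gamma>" "0 < 1 - xprime_sq e x"
    and y1: "0 < y $ e + \<gamma>" "0 < 1 - xprime_sq e y"
    by (auto simp: Omega_def)
  have S: "1 - xprime_sq e ?z \<ge> u * (1 - xprime_sq e x) + v * (1 - xprime_sq e y)"
    using xp uv by (simp add: algebra_simps)
  have Spos: "0 < u * (1 - xprime_sq e x) + v * (1 - xprime_sq e y)"
  proof (cases "u = 0")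
    case True then show ?thesis using uv y1 by simp
  next
    case False
    then have "0 < u * (1 - xprime_sq e x)" using u x1 by simp
    moreover have "0 \<le> v * (1 - xprime_sq e y)" using v y1 by simp
    ultimately show ?thesis by simp
  qed
  have "u * ((x $ e + \<gamma>) powr a * (1 - xprime_sq e x) powr b) + v * ((y $ e + \<gamma>) powr a * (1 - xprime_sq e y) powr b)
      \<le> (u * (x $ e + \<gamma>) + v * (y $ e + \<gamma>)) powr a * (u * (1 - xprime_sq e x) + v * (1 - xprime_sq e y)) powr b"
    by (rule holder2) (use x1 y1 u v uv a b ab in auto)
  also have "\<dots> \<le> (?z $ e + \<gamma>) powr a * (1 - xprime_sq e ?z) powr b"
    unfolding T by (intro mult_left_mono powr_mono2) (use S Spos b in auto)
  finally have F: "u * ((x $ e + \<gamma>) powr a * (1 - xprime_sq e x) powr b) + v * ((y $ e + \<gamma>) powr a * (1 - xprime_sq e y) powr b)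
      \<le> (?z $ e + \<gamma>) powr a * (1 - xprime_sq e ?z) powr b" .
  have "C0 * (u * ((x $ e + \<gamma>) powr a * (1 - xprime_sq e x) powr b) + v * ((y $ e + \<gamma>) powr a * (1 - xprime_sq e y) powr b))
      \<le> C0 * ((?z $ e + \<gamma>) powr a * (1 - xprime_sq e ?z) powr b)"
    using F C0 by (intro mult_left_mono) auto
  then show "C0 * (?z $ e + \<gamma>) - C0 * (?z $ e + \<gamma>) powr a * (1 - xprime_sq e ?z) powr b
         \<le> u * (C0 * (x $ e + \<gamma>) - C0 * (x $ e + \<gamma>) powr a * (1 - xprime_sq e x) powr b) +
            v * (C0 * (y $ e + \<gamma>) - C0 * (y $ e + \<gamma>) powr a * (1 - xprime_sq e y) powr b)"
    unfolding T by (simp add: algebra_simps)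
qed

lemma frontier_w:
  assumes ab: "a + b = 1" and a: "a > 0" and b: "b > 0" and x: "x \<in> frontier (Omega e \<gamma>)"
  shows "C0 * (x $ e + \<gamma>) - C0 * (x $ e + \<gamma>) powr a * (1 - xprime_sq e x) powr b = 0"
proof -
  let ?K = "{x::real^'a. xprime_sq e x \<le> 1 \<and> 0 \<le> x $ e + \<gamma> \<and> x $ e + \<gamma> \<le> 1 - xprime_sq e x}"
  have "closed ?K"
    by (intro closed_Collect_conj closed_Collect_le continuous_intros)
  moreover have "Omega e \<gamma> \<subseteq> ?K" by (auto simp: Omega_def)
  ultimately have "closure (Omega e \<gamma>) \<subseteq> ?K" by (rule closure_minimal[rotated])
  moreover have "x \<in> closure (Omega e \<gamma>)" "x \<notin> Omega e \<gamma>"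
    using x by (auto simp: frontier_def interior_open[OF open_Omega])
  ultimately have xK: "x \<in> ?K" and xO: "x \<notin> Omega e \<gamma>" by auto
  then have "x $ e + \<gamma> = 0 \<or> (x $ e + \<gamma> > 0 \<and> x $ e + \<gamma> = 1 - xprime_sq e x)"
    by (auto simp: Omega_def)
  then show ?thesis
  proof
    assume "x $ e + \<gamma> = 0" then show ?thesis by simp
  next
    assume h: "x $ e + \<gamma> > 0 \<and> x $ e + \<gamma> = 1 - xprime_sq e x"
    then have "(x $ e + \<gamma>) powr a * (1 - xprime_sq e x) powr b = (x $ e + \<gamma>) powr (a + b)"
      by (simp add: powr_add)
    also have "\<dots> = x $ e + \<gamma>" using ab h by simp
    finally show ?thesis by (simp add: mult.assoc)
  qed
qed


theorem lemma4p2: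
  fixes e :: "'n::finite" and k \<gamma> :: real
  assumes "CARD('n) \<ge> 2" and "k \<ge> 0" and "0 < \<gamma>" and "\<gamma> < 1"
  shows "\<exists>C0 > 0.
    let n = real CARD('n);
        w = (\<lambda>x::real^'n. C0 * (x $ e + \<gamma>)
              - C0 * (x $ e + \<gamma>) powr ((2 + k) / (2 * n + 2 * k + 2))
                   * (1 - xprime_sq e x) powr ((2 * n + k) / (2 * n + 2 * k + 2)))
    in smooth_on (Omega e \<gamma>) w
     \<and> convex_on (Omega e \<gamma>) w
     \<and> (\<forall>x\<in>Omega e \<gamma>. det (hessian w x)
            \<le> \<bar>w x\<bar> powr (- (n + 2 + k)) * (x \<bullet> grad w x - w x) powr (- k))
     \<and> (\<forall>x\<in>frontier (Omega e \<gamma>). w x = 0)"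
proof -
  note m2 = assms(1) and k0 = assms(2) and g0 = assms(3) and g1 = assms(4)
  define m where "m = CARD('n)"
  define N where "N = real CARD('n)"
  define a where "a = (2 + k) / (2 * N + 2 * k + 2)"
  define b where "b = (2 * N + k) / (2 * N + 2 * k + 2)"
  define K where "K = \<gamma>*a + 2*b"
  define M where "M = a*b*(2*b)^(m-1)*K powr k"
  define C0 where "C0 = 1/(M+1)"
  have N2: "N \<ge> 2" using m2 by (simp add: N_def)
  have Dpos: "2*N+2*k+2 > 0" using N2 k0 by simp
  have a0: "a > 0" and b0: "b > 0" using Dpos k0 N2 by (simp_all add: a_def b_def)
  have ab: "a + b = 1"
  proof -
    have "a + b = (2+k+(2*N+k))/(2*N+2*k+2)" by (simp add: a_def b_def add_divide_distrib)
    also have "2+k+(2*N+k) = 2*N+2*k+2" by simp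
    finally show ?thesis using Dpos by simp
  qed
  have Kpos: "K > 0" unfolding K_def using g0 a0 b0 by (intro add_pos_pos mult_pos_pos) auto
  have Mpos: "M > 0" unfolding M_def using Kpos a0 b0 by simp
  have C0pos: "C0 > 0" using Mpos by (simp add: C0_def)
  define w where "w = (\<lambda>x::real^'n. C0 * (x $ e + \<gamma>) - C0 * (x $ e + \<gamma>) powr a * (1 - xprime_sq e x) powr b)"
  have gw: "good e \<gamma> w"
  proof -
    have eq: "w = (\<lambda>x. (\<lambda>x. C0) x * (\<lambda>x. (\<lambda>x. x $ e) x + (\<lambda>x. \<gamma>) x) x + (\<lambda>x. (\<lambda>x. - C0) x * (\<lambda>x. (\<lambda>x. (x $ e + \<gamma>) powr a) x * (\<lambda>x. (1 - xprime_sq e x) powr b) x) x) x)"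
      by (simp add: w_def fun_eq_iff algebra_simps)
    show ?thesis unfolding eq by (intro good.intros)
  qed
  have smooth: "smooth_on (Omega e \<gamma>) w" by (rule good_smooth[OF gw])
  have conv: "convex_on (Omega e \<gamma>) w" unfolding w_def
    by (rule convex_w) (use C0pos a0 b0 ab in auto)
  have front: "\<forall>x\<in>frontier (Omega e \<gamma>). w x = 0"
    unfolding w_def using frontier_w[OF ab a0 b0] by blast
  have detineq: "\<forall>x\<in>Omega e \<gamma>. det (hessian w x)
            \<le> \<bar>w x\<bar> powr (- (N + 2 + k)) * (x \<bullet> grad w x - w x) powr (- k)"
  proof
    fix x assume x: "x \<in> Omega e \<gamma>"
    define T where "T = x $ e + \<gamma>"
    define S where "S = 1 - xprime_sq e x"
    have T0: "0 < T" and TS: "T < S" using x by (auto simp: Omega_def T_def S_def)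
    have S1: "S \<le> 1" using xp_nonneg[of e x] by (simp add: S_def)
    have S0: "0 < S" using T0 TS by simp
    define P1 where "P1 = T powr (a-1) * S powr b"
    define P2 where "P2 = T powr a * S powr (b-1)"
    define P3 where "P3 = T powr a * S powr b"
    define P4 where "P4 = T powr (a-2) * S powr b"
    define L where "L = (T-\<gamma>)*(1 - a*P1) + 2*b*P2*(1-S) - T + P3"
    have KI: "0 < L" "0 < P3 - T"
      "(C0*(a*b*P4))*(C0*(2*b*P2))^(m-1) \<le> (C0*(P3 - T)) powr (-(N+2+k)) * (C0*L) powr (-k)"
      using key_ineq[OF _ a_def b_def K_def M_def _ k0 g0 g1 T0 TS S1 C0_def] m2
      by (simp_all add: m_def N_def P1_def P2_def P3_def P4_def L_def)
    define u where "u = (\<lambda>i. if i = e then 0 else 2*T*x$i/S)"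
    define d where "d = (\<lambda>i. if i = e then C0*(a*b*P4) else C0*(2*b*P2))"
    have ue: "u e = 0" by (simp add: u_def)
    have f1: "T powr (a-1) = T * T powr (a-2)"
    proof -
      have "T powr (a-1) = T powr (1 + (a-2))" by simp
      also have "\<dots> = T powr 1 * T powr (a-2)" by (rule powr_add)
      finally show ?thesis using T0 by simp
    qed
    have f2: "T powr a = T^2 * T powr (a-2)"
    proof -
      have "T powr a = T powr (real 2 + (a-2))" by simp
      also have "\<dots> = T powr (real 2) * T powr (a-2)" by (rule powr_add)
      also have "T powr (real 2) = T^2" using T0 by (rule powr_realpow)
      finally show ?thesis .
    qed
    have f3: "S powr (b-1) = S powr b / S"
    proof -
      have "S powr (b-1) = S powr b / S powr 1" by (rule powr_diff)
      then show ?thesis using S0 by simp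
    qed
    have f4: "S powr (b-1-1) = S powr b / S^2"
    proof -
      have "S powr (b-1-1) = S powr (b - real 2)" by simp
      also have "\<dots> = S powr b / S powr (real 2)" by (rule powr_diff)
      also have "S powr (real 2) = S^2" using S0 by (rule powr_realpow)
      finally show ?thesis .
    qed
    have a2: "a - 1 - 1 = a - 2" by simp
    have b1: "b = 1 - a" using ab by simp
    have Hq: "hessian w x = (\<chi> i j. (if i = j then 1 else 0) + (if j = e then u i else 0)) ** (\<chi> i j. if i = j then d i else 0)
      ** transpose (\<chi> i j. (if i = j then 1 else 0) + (if j = e then u i else 0))"
      unfolding vec_eq_iff
    proof (intro allI)
      fix i j
      have "hessian w x $ i $ j = partial (partial w j) i x" by (simp add: hessian_def)
      also have "\<dots> = (if j = e then (- C0 * a) * (if i = e then (a - 1) * T powr (a - 1 - 1) * S powr b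
                     else - 2 * b * T powr (a - 1) * S powr (b - 1) * x $ i)
       else (2 * b * C0) * ((if i = e then a * T powr (a - 1) * S powr (b - 1)
                     else - 2 * (b - 1) * T powr a * S powr (b - 1 - 1) * x $ i) * x $ j
              + T powr a * S powr (b - 1) * (if i = j then 1 else 0)))"
        unfolding w_def T_def S_def by (rule w_hess[OF x])
      also have "\<dots> = (if i = j \<and> i \<noteq> e then d i else 0) + ((if i = e then 1 else 0) + u i) * ((if j = e then 1 else 0) + u j) * d e"
        unfolding d_def u_def P2_def P4_def a2 f1 f2 f3 f4
        using T0 S0 by (cases "i = e"; cases "j = e"; simp add: b1 field_simps power2_eq_square)
      also have "\<dots> = ((\<chi> i j. (if i = j then 1 else 0) + (if j = e then u i else 0)) ** (\<chi> i j. if i = j then d i else 0)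
      ** transpose (\<chi> i j. (if i = j then 1 else 0) + (if j = e then u i else 0))) $ i $ j"
        by (rule LDL_entries[where u=u and e=e and d=d, OF ue, symmetric])
      finally show "hessian w x $ i $ j = ((\<chi> i j. (if i = j then 1 else 0) + (if j = e then u i else 0)) ** (\<chi> i j. if i = j then d i else 0)
      ** transpose (\<chi> i j. (if i = j then 1 else 0) + (if j = e then u i else 0))) $ i $ j" .
    qed
    have detH: "det (hessian w x) = (C0*(a*b*P4))*(C0*(2*b*P2))^(m-1)"
    proof -
      have "det (hessian w x) = prod d UNIV" unfolding Hq by (rule LDL_det[where u=u and e=e and d=d, OF ue])
      also have "\<dots> = d e * prod d (UNIV - {e})" by (rule prod.remove) auto
      also have "prod d (UNIV - {e}) = prod (\<lambda>i. C0*(2*b*P2)) (UNIV - {e})"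
        by (rule prod.cong) (auto simp: d_def)
      also have "\<dots> = (C0*(2*b*P2))^(m-1)" by (simp add: m_def card_Diff_singleton)
      finally show ?thesis by (simp add: d_def)
    qed
    have wx: "w x = - (C0*(P3 - T))" by (simp add: w_def T_def S_def P3_def algebra_simps)
    have absw: "\<bar>w x\<bar> = C0*(P3 - T)" using wx KI(2) C0pos by simp
    have gradx: "x \<bullet> grad w x = C0*((T-\<gamma>)*(1 - a*P1) + 2*b*P2*(1-S))"
    proof -
      have "x \<bullet> grad w x = (\<Sum>i\<in>UNIV. x $ i * partial w i x)" by (simp add: inner_vec_def grad_def)
      also have "\<dots> = x $ e * partial w e x + (\<Sum>i\<in>UNIV-{e}. x $ i * partial w i x)" by (rule sum.remove) auto
      also have "(\<Sum>i\<in>UNIV-{e}. x $ i * partial w i x) = (\<Sum>i\<in>UNIV-{e}. C0 * (2 * b * P2) * (x $ i)^2)"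
        by (rule sum.cong) (auto simp: w_def w_partial[OF x] P2_def T_def S_def power2_eq_square)
      also have "\<dots> = C0 * (2 * b * P2) * xprime_sq e x" by (simp add: xprime_sq_def sum_distrib_left)
      also have "x $ e * partial w e x = (T - \<gamma>) * (C0 * (1 - a * P1))"
        by (simp add: w_def w_partial[OF x] P1_def T_def S_def)
      finally show ?thesis by (simp add: S_def algebra_simps)
    qed
    have Lx: "x \<bullet> grad w x - w x = C0 * L" unfolding gradx wx L_def by (simp add: algebra_simps)
    show "det (hessian w x) \<le> \<bar>w x\<bar> powr (- (N + 2 + k)) * (x \<bullet> grad w x - w x) powr (- k)"
      unfolding detH absw Lx using KI(3) by simp
  qed
  have "C0 > 0 \<and> smooth_on (Omega e \<gamma>) w \<and> convex_on (Omega e \<gamma>) w \<and> (\<forall>x\<in>Omega e \<gamma>. det (hessian w x)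
            \<le> \<bar>w x\<bar> powr (- (N + 2 + k)) * (x \<bullet> grad w x - w x) powr (- k))
     \<and> (\<forall>x\<in>frontier (Omega e \<gamma>). w x = 0)"
    using C0pos smooth conv detineq front by blast
  then show ?thesis
    unfolding Let_def w_def a_def b_def N_def by blast
qed

end
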